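(* Let $X$ be a maximal space, $A\subseteq X$ and $x\in X$. If $x\in\overline{A}\setminus A$, then there is $B\subseteq A$ with no isolated points (in its subspace topology) such that $x\in\overline{B}$.
   Context: Spaces are countable $T_1$ topological spaces. A space is maximal if it is dense-in-itself (has no isolated points) and every strictly finer topology on it has an isolated point. *)

theory Defs
  imports "HOL-Analysis.Analysis"
begin

definition isolated_point :: "'a topology \<Rightarrow> 'a \<Rightarrow> bool" where
  "isolated_point X x \<longleftrightarrow> x \<in> topspace X \<and> openin X {x}"

definition dense_in_itself :: "'a topology \<Rightarrow> bool" where
  "dense_in_itself X \<longleftrightarrow> (\<forall>x\<in>topspace X. \<not> isolated_point X x)"

definition finer_topology :: "'a topology \<Rightarrow> 'a topology \<Rightarrow> bool" where
  "finer_topology T X \<longleftrightarrow> topspace T = topspace X \<and> (\<forall>U. openin X U \<longrightarrow> openin T U)"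

definition maximal_space :: "'a topology \<Rightarrow> bool" where
  "maximal_space X \<longleftrightarrow> dense_in_itself X \<and>
     (\<forall>T. finer_topology T X \<and> T \<noteq> X \<longrightarrow> (\<exists>x. isolated_point T x))"

end

theory Submission
  imports Defs
begin

definition expT :: "'a topology \<Rightarrow> 'a set \<Rightarrow> 'a topology" where
  "expT X S = topology (\<lambda>U. U \<subseteq> topspace X \<and> (\<forall>p\<in>U. \<exists>V. openin X V \<and> p \<in> V \<and>
       (if p \<in> S then V \<subseteq> U else V - S \<subseteq> U)))"

lemma expT_open:
  "openin (expT X S) U \<longleftrightarrow> U \<subseteq> topspace X \<and> (\<forall>p\<in>U. \<exists>V. openin X V \<and> p \<in> V \<and>
       (if p \<in> S then V \<subseteq> U else V - S \<subseteq> U))"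
proof -
  have "istopology (\<lambda>U. U \<subseteq> topspace X \<and> (\<forall>p\<in>U. \<exists>V. openin X V \<and> p \<in> V \<and>
       (if p \<in> S then V \<subseteq> U else V - S \<subseteq> U)))"
    unfolding istopology_def
  proof (rule conjI; intro allI impI)
    fix U1 U2 :: "'a set"
    assume a: "U1 \<subseteq> topspace X \<and> (\<forall>p\<in>U1. \<exists>V. openin X V \<and> p \<in> V \<and> (if p \<in> S then V \<subseteq> U1 else V - S \<subseteq> U1))"
      "U2 \<subseteq> topspace X \<and> (\<forall>p\<in>U2. \<exists>V. openin X V \<and> p \<in> V \<and> (if p \<in> S then V \<subseteq> U2 else V - S \<subseteq> U2))"
    show "U1 \<inter> U2 \<subseteq> topspace X \<and> (\<forall>p\<in>U1 \<inter> U2. \<exists>V. openin X V \<and> p \<in> V \<and> (if p \<in> S then V \<subseteq> U1 \<inter> U2 else V - S \<subseteq> U1 \<inter> U2))"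
    proof (intro conjI ballI)
      show "U1 \<inter> U2 \<subseteq> topspace X" using a by blast
      fix p assume p: "p \<in> U1 \<inter> U2"
      obtain V1 where v1: "openin X V1" "p \<in> V1" "if p \<in> S then V1 \<subseteq> U1 else V1 - S \<subseteq> U1" using a p by blast
      obtain V2 where v2: "openin X V2" "p \<in> V2" "if p \<in> S then V2 \<subseteq> U2 else V2 - S \<subseteq> U2" using a p by blast
      show "\<exists>V. openin X V \<and> p \<in> V \<and> (if p \<in> S then V \<subseteq> U1 \<inter> U2 else V - S \<subseteq> U1 \<inter> U2)"
        apply (rule exI[of _ "V1 \<inter> V2"]) using v1 v2 by (auto split: if_splits)
    qed
  next
    fix K :: "'a set set"
    assume a: "\<forall>U\<in>K. U \<subseteq> topspace X \<and> (\<forall>p\<in>U. \<exists>V. openin X V \<and> p \<in> V \<and> (if p \<in> S then V \<subseteq> U else V - S \<subseteq> U))"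
    show "\<Union>K \<subseteq> topspace X \<and> (\<forall>p\<in>\<Union>K. \<exists>V. openin X V \<and> p \<in> V \<and> (if p \<in> S then V \<subseteq> \<Union>K else V - S \<subseteq> \<Union>K))"
    proof (intro conjI ballI)
      show "\<Union>K \<subseteq> topspace X" using a by blast
      fix p assume "p \<in> \<Union>K"
      then obtain U where U: "U \<in> K" "p \<in> U" by blast
      then obtain V where v: "openin X V" "p \<in> V" "if p \<in> S then V \<subseteq> U else V - S \<subseteq> U" using a by blast
      show "\<exists>V. openin X V \<and> p \<in> V \<and> (if p \<in> S then V \<subseteq> \<Union>K else V - S \<subseteq> \<Union>K)"
        apply (rule exI[of _ V]) using v U by (auto split: if_splits)
    qed
  qed
  then show ?thesis unfolding expT_def by simp
qed

lemma key:
  assumes "t1_space X" "maximal_space X" "x \<in> X closure_of S - S"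
  shows "X interior_of S \<noteq> {}"
proof -
  let ?T = "expT X S"
  have crowd: "\<And>p. p \<in> topspace X \<Longrightarrow> \<not> openin X {p}"
    using assms(2) unfolding maximal_space_def dense_in_itself_def isolated_point_def by blast
  have xt: "x \<in> topspace X" using assms(3) in_closure_of by fastforce
  have ts: "topspace ?T = topspace X"
  proof
    show "topspace ?T \<subseteq> topspace X" using expT_open[of X S "topspace ?T"] by simp
    have "openin ?T (topspace X)" unfolding expT_open by auto
    then show "topspace X \<subseteq> topspace ?T" by (simp add: openin_subset)
  qed
  have fin: "finer_topology ?T X" unfolding finer_topology_def
  proof (intro conjI allI impI)
    show "topspace ?T = topspace X" by (rule ts)
    fix U assume "openin X U"
    then show "openin ?T U" unfolding expT_open by (auto simp: openin_subset)
  qed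
  have o1: "openin ?T (topspace X - S)" unfolding expT_open
    by (intro conjI ballI, blast, rule_tac x="topspace X" in exI, auto)
  have "\<not> openin X (topspace X - S)"
  proof
    assume "openin X (topspace X - S)"
    with assms(3) xt show False by (auto simp: in_closure_of)
  qed
  then have "?T \<noteq> X" using o1 by auto
  then obtain p where p: "isolated_point ?T p" using assms(2) fin unfolding maximal_space_def by blast
  then have pt: "p \<in> topspace X" and po: "openin ?T {p}" using ts unfolding isolated_point_def by auto
  then obtain V where v: "openin X V" "p \<in> V" "if p \<in> S then V \<subseteq> {p} else V - S \<subseteq> {p}"
    unfolding expT_open by blast
  show ?thesis
  proof (cases "p \<in> S")
    case True
    then have "V = {p}" using v by auto
    then show ?thesis using v crowd pt by auto
  next
    case False
    then have sub: "V - {p} \<subseteq> S" using v by auto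
    have cl: "closedin X {p}" using assms(1) pt by (simp add: t1_space_closedin_singleton)
    have op: "openin X (V - {p})" using v cl by (simp add: openin_diff)
    have "V \<noteq> {p}" using v crowd pt by auto
    then have ne: "V - {p} \<noteq> {}" using v by auto
    have "V - {p} \<subseteq> X interior_of S" using op sub by (simp add: interior_of_maximal)
    then show ?thesis using ne by auto
  qed
qed

theorem mainTheorem11:
  fixes X :: "'a topology" and A :: "'a set" and x :: 'a
  assumes "countable (topspace X)" and "t1_space X"
    and "maximal_space X"
    and "A \<subseteq> topspace X"
    and "x \<in> X closure_of A - A"
  shows "\<exists>B. B \<subseteq> A \<and> dense_in_itself (subtopology X B) \<and> x \<in> X closure_of B"
proof (intro exI conjI)
  let ?I = "X interior_of A"
  show "?I \<subseteq> A" by (rule interior_of_subset)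
  have crowd: "\<And>p. p \<in> topspace X \<Longrightarrow> \<not> openin X {p}"
    using assms(3) unfolding maximal_space_def dense_in_itself_def isolated_point_def by blast
  show "dense_in_itself (subtopology X ?I)"
    unfolding dense_in_itself_def isolated_point_def
  proof (intro ballI notI)
    fix p assume "p \<in> topspace (subtopology X ?I)" "p \<in> topspace (subtopology X ?I) \<and> openin (subtopology X ?I) {p}"
    then have "openin X {p}" "p \<in> topspace X"
      using openin_open_subtopology[of X ?I] by auto
    then show False using crowd by blast
  qed
  have xt: "x \<in> topspace X" using assms(5) in_closure_of by fastforce
  show "x \<in> X closure_of ?I" unfolding in_closure_of
  proof (intro conjI allI impI xt)
    fix W assume W: "x \<in> W \<and> openin X W"
    have "x \<in> X closure_of (A \<inter> W)"
      unfolding in_closure_of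
    proof (intro conjI allI impI xt)
      fix T assume T: "x \<in> T \<and> openin X T"
      then have "x \<in> T \<inter> W \<and> openin X (T \<inter> W)" using W by auto
      moreover have "\<forall>T. x \<in> T \<and> openin X T \<longrightarrow> (\<exists>y. y \<in> A \<and> y \<in> T)" using assms(5) by (simp add: in_closure_of)
      ultimately obtain y where "y \<in> A" "y \<in> T \<inter> W" by blast
      then show "\<exists>y. y \<in> A \<inter> W \<and> y \<in> T" by blast
    qed
    moreover have "x \<notin> A \<inter> W" using assms(5) by blast
    ultimately have "x \<in> X closure_of (A \<inter> W) - (A \<inter> W)" by blast
    then have "X interior_of (A \<inter> W) \<noteq> {}" by (rule key[OF assms(2,3)])
    moreover have "X interior_of (A \<inter> W) \<subseteq> ?I \<inter> W"
      using interior_of_mono[of "A \<inter> W" A X] interior_of_subset[of X "A \<inter> W"] by blast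
    ultimately show "\<exists>y. y \<in> ?I \<and> y \<in> W" by blast
  qed
qed

end
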